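(* Let $\mathcal{M}=\{p(x\mid\theta):\ x\in\mathcal{X}\subseteq\mathbb{R}^n,\ \theta\in\Theta\subseteq\mathbb{R}^d\}$ be a model, $\mathcal{P}$ a class of priors, $\mathbf{X}=(x_1,\dots,x_M)$ data and $\gamma>0$. Then empirical reference priors are invariant under transformations of $\theta$ and $x$ in the following sense: (i) for every diffeomorphism $\varphi\colon\Theta\to\tilde\Theta$, $\pi_{\rm er}(\cdot\mid\mathcal{M}_\varphi,\mathcal{P}_\varphi,\mathbf{X},\gamma)=\varphi_\ast\pi_{\rm er}(\cdot\mid\mathcal{M},\mathcal{P},\mathbf{X},\gamma)$, i.e. $\pi$ is an empirical reference prior for $(\mathcal{M},\mathcal{P},\mathbf{X},\gamma)$ if and only if $\varphi_\ast\pi$ is an empirical reference prior for $(\mathcal{M}_\varphi,\mathcal{P}_\varphi,\mathbf{X},\gamma)$; (ii) for every diffeomorphism $\psi\colon\mathcal{X}\to\tilde{\mathcal{X}}$, $\pi_{\rm er}(\cdot\mid\mathcal{M}_\psi,\mathcal{P},\mathbf{X}_\psi,\gamma)=\pi_{\rm er}(\cdot\mid\mathcal{M},\mathcal{P},\mathbf{X},\gamma)$, i.e. $\pi$ is an empirical reference prior for $(\mathcal{M},\mathcal{P},\mathbf{X},\gamma)$ if and only if it is one for $(\mathcal{M}_\psi,\mathcal{P},\mathbf{X}_\psi,\gamma)$.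
   Context: For a prior $\pi$ put $p(x\mid\pi)=\int_\Theta p(x\mid\theta)\pi(\theta)\,\mathrm d\theta$ and marginal likelihood $L(\pi)=L(\pi\mid\mathcal{M},\mathbf{X})=\prod_{m=1}^M p(x_m\mid\pi)$. For $k\in\mathbb{N}$, $\mathcal{M}^k$ is the model of $k$ independent replications: $p(\vec x\mid\theta)=\prod_{i=1}^k p(x^{(i)}\mid\theta)$, $\vec x\in\mathcal{X}^k$. The expected information of a model $\mathcal{N}=\{p(y\mid\theta)\}$ is $\mathcal{I}[\pi\mid\mathcal{N}]=\int\int\pi(\theta)p(y\mid\theta)\log\big(p(y\mid\theta)/p(y\mid\pi)\big)\,\mathrm dy\,\mathrm d\theta$. A function $\pi\in\mathcal{P}$ has the $\mathrm{MMI}(\mathbf{X})$ property for $(\mathcal{M},\mathcal{P},\mathbf{X},\gamma)$ if $\pi$ is a proper probability density and for every proper probability density $\tilde\pi\in\mathcal{P}$, $\lim_{k\to\infty}\big((\log L(\pi)+\gamma\mathcal{I}[\pi\mid\mathcal{M}^k])-(\log L(\tilde\pi)+\gamma\mathcal{I}[\tilde\pi\mid\mathcal{M}^k])\big)\ge 0$. An empirical reference prior $\pi_{\rm er}(\cdot\mid\mathcal{M},\mathcal{P},\mathbf{X},\gamma)$ is a probability density having this property. Transformations: $\varphi_\ast,\psi_\ast$ denote pushforwards; $\mathcal{M}_\varphi$ is given by $p(x\mid\tilde\theta)=p(x\mid\varphi^{-1}(\tilde\theta))$; $\mathcal{P}_\varphi=\{\varphi_\ast\pi:\pi\in\mathcal{P}\}$;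 $\mathcal{M}_\psi$ is given by $p(\tilde x\mid\theta)=|\det(\psi^{-1})'(\tilde x)|\,p(\psi^{-1}(\tilde x)\mid\theta)$; $\mathbf{X}_\psi=(\psi(x_1),\dots,\psi(x_M))$. *)

theory Defs
  imports "HOL-Analysis.Analysis"
begin

text \<open>Priors are real-valued functions on real^'d (vanishing outside \<Theta>).\<close>

definition is_model :: "(real^'n) set \<Rightarrow> (real^'d) set \<Rightarrow> (real^'n \<Rightarrow> real^'d \<Rightarrow> real) \<Rightarrow> bool" where
  "is_model X \<Theta> p \<longleftrightarrow>
     (\<lambda>(x, \<theta>). p x \<theta>) \<in> borel_measurable (lebesgue_on X \<Otimes>\<^sub>M lebesgue_on \<Theta>) \<and>
     (\<forall>\<theta>\<in>\<Theta>. (\<forall>x\<in>X. 0 \<le> p x \<theta>) \<and> integrable (lebesgue_on X) (\<lambda>x. p x \<theta>)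
            \<and> (\<integral>x. p x \<theta> \<partial>lebesgue_on X) = 1)"

definition proper_density :: "(real^'d) set \<Rightarrow> (real^'d \<Rightarrow> real) \<Rightarrow> bool" where
  "proper_density \<Theta> \<pi> \<longleftrightarrow>
     (\<forall>\<theta>\<in>\<Theta>. 0 \<le> \<pi> \<theta>) \<and> integrable (lebesgue_on \<Theta>) \<pi> \<and> (\<integral>\<theta>. \<pi> \<theta> \<partial>lebesgue_on \<Theta>) = 1"

definition pmarg :: "(real^'d) set \<Rightarrow> ('y \<Rightarrow> real^'d \<Rightarrow> real) \<Rightarrow> (real^'d \<Rightarrow> real) \<Rightarrow> 'y \<Rightarrow> real" where
  "pmarg \<Theta> q \<pi> y = (\<integral>\<theta>. q y \<theta> * \<pi> \<theta> \<partial>lebesgue_on \<Theta>)"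

definition marg_lik :: "(real^'d) set \<Rightarrow> (real^'n \<Rightarrow> real^'d \<Rightarrow> real) \<Rightarrow> (real^'d \<Rightarrow> real) \<Rightarrow> (real^'n) list \<Rightarrow> real" where
  "marg_lik \<Theta> p \<pi> xs = prod_list (map (pmarg \<Theta> p \<pi>) xs)"

definition log_marg_lik :: "(real^'d) set \<Rightarrow> (real^'n \<Rightarrow> real^'d \<Rightarrow> real) \<Rightarrow> (real^'d \<Rightarrow> real) \<Rightarrow> (real^'n) list \<Rightarrow> ereal" where
  "log_marg_lik \<Theta> p \<pi> xs =
     (if 0 < marg_lik \<Theta> p \<pi> xs then ereal (ln (marg_lik \<Theta> p \<pi> xs)) else -\<infinity>)"

text \<open>Model M^k of k independent replications: p(xv | \<theta>) = \<Prod>_{i<k} p(xv i | \<theta>),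
  xv ranging over X^k (the product measure space).\<close>
definition rep_model :: "nat \<Rightarrow> ('x \<Rightarrow> real^'d \<Rightarrow> real) \<Rightarrow> (nat \<Rightarrow> 'x) \<Rightarrow> real^'d \<Rightarrow> real" where
  "rep_model k p xv \<theta> = (\<Prod>i<k. p (xv i) \<theta>)"

definition rep_space :: "nat \<Rightarrow> 'a measure \<Rightarrow> (nat \<Rightarrow> 'a) measure" where
  "rep_space k Y = PiM {..<k} (\<lambda>_. Y)"

definition exp_info :: "'y measure \<Rightarrow> (real^'d) set \<Rightarrow> ('y \<Rightarrow> real^'d \<Rightarrow> real) \<Rightarrow> (real^'d \<Rightarrow> real) \<Rightarrow> real" where
  "exp_info Y \<Theta> q \<pi> =
     (\<integral>\<theta>. (\<integral>y. \<pi> \<theta> * q y \<theta> * ln (q y \<theta> / pmarg \<Theta> q \<pi> y) \<partial>Y) \<partial>lebesgue_on \<Theta>)"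

definition mmi_objective :: "(real^'n) set \<Rightarrow> (real^'d) set \<Rightarrow> (real^'n \<Rightarrow> real^'d \<Rightarrow> real)
     \<Rightarrow> (real^'n) list \<Rightarrow> real \<Rightarrow> nat \<Rightarrow> (real^'d \<Rightarrow> real) \<Rightarrow> ereal" where
  "mmi_objective X \<Theta> p xs \<gamma> k \<pi> =
     log_marg_lik \<Theta> p \<pi> xs + ereal (\<gamma> * exp_info (rep_space k (lebesgue_on X)) \<Theta> (rep_model k p) \<pi>)"

text \<open>MMI(X) property = being an empirical reference prior for (M, P, X, \<gamma>).
  "lim_{k\<to>\<infinity>} (...) \<ge> 0" is read as: the limit exists (in the extended reals) and is \<ge> 0.\<close>
definition emp_ref_prior :: "(real^'n) set \<Rightarrow> (real^'d) set \<Rightarrow> (real^'n \<Rightarrow> real^'d \<Rightarrow> real)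
     \<Rightarrow> (real^'d \<Rightarrow> real) set \<Rightarrow> (real^'n) list \<Rightarrow> real \<Rightarrow> (real^'d \<Rightarrow> real) \<Rightarrow> bool" where
  "emp_ref_prior X \<Theta> p P xs \<gamma> \<pi> \<longleftrightarrow>
     \<pi> \<in> P \<and> proper_density \<Theta> \<pi> \<and>
     (\<forall>\<pi>'\<in>P. proper_density \<Theta> \<pi>' \<longrightarrow>
        (\<exists>l\<ge>0. ((\<lambda>k. mmi_objective X \<Theta> p xs \<gamma> k \<pi> - mmi_objective X \<Theta> p xs \<gamma> k \<pi>')
                   \<longlongrightarrow> l) sequentially))"

definition diffeo_on :: "(real^'m \<Rightarrow> real^'m) \<Rightarrow> (real^'m) set \<Rightarrow> (real^'m) set \<Rightarrow> bool" where
  "diffeo_on f A B \<longleftrightarrow> open A \<and> open B \<and> bij_betw f A B \<and>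
     (\<forall>x\<in>A. f differentiable (at x)) \<and> (\<forall>y\<in>B. inv_into A f differentiable (at y)) \<and>
     continuous_on A (\<lambda>x. matrix (frechet_derivative f (at x))) \<and>
     continuous_on B (\<lambda>y. matrix (frechet_derivative (inv_into A f) (at y)))"

definition inv_jac :: "(real^'m \<Rightarrow> real^'m) \<Rightarrow> (real^'m) set \<Rightarrow> real^'m \<Rightarrow> real" where
  "inv_jac f A y = \<bar>det (matrix (frechet_derivative (inv_into A f) (at y)))\<bar>"

definition push_density :: "(real^'d \<Rightarrow> real^'d) \<Rightarrow> (real^'d) set \<Rightarrow> (real^'d \<Rightarrow> real) \<Rightarrow> real^'d \<Rightarrow> real" where
  "push_density \<phi> \<Theta> \<pi> y = (if y \<in> \<phi> ` \<Theta> then \<pi> (inv_into \<Theta> \<phi> y) * inv_jac \<phi> \<Theta> y else 0)"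

definition param_transform :: "(real^'d \<Rightarrow> real^'d) \<Rightarrow> (real^'d) set \<Rightarrow> (real^'n \<Rightarrow> real^'d \<Rightarrow> real) \<Rightarrow> real^'n \<Rightarrow> real^'d \<Rightarrow> real" where
  "param_transform \<phi> \<Theta> p x \<theta>' = p x (inv_into \<Theta> \<phi> \<theta>')"

definition data_transform :: "(real^'n \<Rightarrow> real^'n) \<Rightarrow> (real^'n) set \<Rightarrow> (real^'n \<Rightarrow> real^'d \<Rightarrow> real) \<Rightarrow> real^'n \<Rightarrow> real^'d \<Rightarrow> real" where
  "data_transform \<psi> X p x' \<theta> = inv_jac \<psi> X x' * p (inv_into X \<psi> x') \<theta>"

end

theory Submission
  imports Defs "HOL-Analysis.Analysis"
begin

typedef 'a wo = "UNIV :: 'a set" by simp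

lemma bij_Rep_wo: "bij Rep_wo"
  by (metis Rep_wo_inverse Abs_wo_inverse UNIV_I bij_betw_byWitness subset_UNIV)

instance wo :: (finite) finite
proof
  have "(UNIV :: 'a wo set) = Abs_wo ` UNIV"
    by (metis Rep_wo_inverse surj_def)
  moreover have "finite (range (Abs_wo :: 'a \<Rightarrow> 'a wo))" by simp
  ultimately show "finite (UNIV :: 'a wo set)" by simp
qed

instantiation wo :: (finite) linorder
begin
definition less_eq_wo :: "'a wo \<Rightarrow> 'a wo \<Rightarrow> bool" where
  "less_eq_wo x y \<longleftrightarrow> to_nat (Rep_wo x) \<le> to_nat (Rep_wo y)"
definition less_wo :: "'a wo \<Rightarrow> 'a wo \<Rightarrow> bool" where
  "less_wo x y \<longleftrightarrow> to_nat (Rep_wo x) < to_nat (Rep_wo y)"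
instance
proof
  fix x y z :: "'a wo"
  show "(x < y) = (x \<le> y \<and> \<not> y \<le> x)" by (auto simp: less_eq_wo_def less_wo_def)
  show "x \<le> x" by (simp add: less_eq_wo_def)
  show "x \<le> y \<Longrightarrow> y \<le> z \<Longrightarrow> x \<le> z" by (simp add: less_eq_wo_def)
  show "x \<le> y \<Longrightarrow> y \<le> x \<Longrightarrow> x = y"
    by (simp add: less_eq_wo_def Rep_wo_inject[symmetric])
  show "x \<le> y \<or> y \<le> x" by (simp add: less_eq_wo_def) linarith
qed
end

instance wo :: (finite) wellorder
proof
  fix P :: "'a wo \<Rightarrow> bool" and a
  assume step: "\<And>x. (\<And>y. y < x \<Longrightarrow> P y) \<Longrightarrow> P x"
  have "\<forall>x::'a wo. to_nat (Rep_wo x) = n \<longrightarrow> P x" for n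
  proof (induction n rule: less_induct)
    case (less n)
    show ?case
    proof (intro allI impI)
      fix x :: "'a wo" assume xn: "to_nat (Rep_wo x) = n"
      show "P x"
      proof (rule step)
        fix y assume "y < x"
        then have "to_nat (Rep_wo y) < n" using xn by (simp add: less_wo_def)
        then show "P y" using less by blast
      qed
    qed
  qed
  then show "P a" by blast
qed

definition relab :: "('b::finite \<Rightarrow> 'a::finite) \<Rightarrow> real^'a \<Rightarrow> real^'b" where
  "relab r x = (\<chi> i. x $ r i)"

lemma relab_nth [simp]: "relab r x $ i = x $ r i"
  by (simp add: relab_def)

lemma relab_inv1 [simp]: "bij r \<Longrightarrow> relab (inv r) (relab r x) = x"
  by (simp add: vec_eq_iff bij_def surj_f_inv_f inv_f_f)

lemma relab_inv2 [simp]: "bij r \<Longrightarrow> relab r (relab (inv r) y) = y"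
  by (simp add: vec_eq_iff bij_def surj_f_inv_f inv_f_f)

lemma linear_relab: "linear (relab r)"
  by (rule linearI) (simp_all add: vec_eq_iff)

lemma bounded_linear_relab: "bounded_linear (relab r)"
  using linear_relab linear_conv_bounded_linear by blast

lemma norm_relab: assumes "bij r" shows "norm (relab r x) = norm x"
proof -
  have "(\<Sum>i\<in>UNIV. (norm (x $ r i))\<^sup>2) = (\<Sum>j\<in>UNIV. (norm (x $ j))\<^sup>2)"
    using sum.reindex[of r UNIV "\<lambda>j. (norm (x $ j))\<^sup>2"] assms
    by (simp add: bij_def o_def)
  then show ?thesis by (simp add: norm_vec_def L2_set_def)
qed

lemma relab_bij: "bij r \<Longrightarrow> bij (relab r)"
  by (rule bij_betw_byWitness[where f'="relab (inv r)"]) auto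

lemma relab_mem_iff: "bij r \<Longrightarrow> y \<in> relab r ` S \<longleftrightarrow> relab (inv r) y \<in> S"
proof -
  assume r: "bij r"
  show ?thesis
  proof
    assume "y \<in> relab r ` S" then show "relab (inv r) y \<in> S" using r by auto
  next
    assume "relab (inv r) y \<in> S"
    then have "relab r (relab (inv r) y) \<in> relab r ` S" by blast
    then show "y \<in> relab r ` S" using r by simp
  qed
qed

lemma relab_cbox: assumes "bij r" shows "relab r ` cbox u v = cbox (relab r u) (relab r v)"
proof
  show "relab r ` cbox u v \<subseteq> cbox (relab r u) (relab r v)"
    by (auto simp: mem_box_cart)
  show "cbox (relab r u) (relab r v) \<subseteq> relab r ` cbox u v"
  proof
    fix y assume y: "y \<in> cbox (relab r u) (relab r v)"
    have "relab (inv r) y \<in> cbox u v"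
      unfolding mem_box_cart
    proof
      fix i
      from y have "u $ r (inv r i) \<le> y $ inv r i \<and> y $ inv r i \<le> v $ r (inv r i)"
        by (simp add: mem_box_cart)
      then show "u $ i \<le> relab (inv r) y $ i \<and> relab (inv r) y $ i \<le> v $ i"
        using assms by (simp add: bij_is_surj surj_f_inv_f)
    qed
    then show "y \<in> relab r ` cbox u v"
      using assms by (metis image_eqI relab_inv2)
  qed
qed

lemma content_relab: assumes "bij r" shows "Henstock_Kurzweil_Integration.content (relab r ` cbox u v) = Henstock_Kurzweil_Integration.content (cbox u v)"
proof -
  have e: "cbox (relab r u) (relab r v) = {} \<longleftrightarrow> cbox u v = {}"
    using relab_cbox[OF assms] by (metis image_is_empty)
  have "(\<Prod>i\<in>UNIV. v $ r i - u $ r i) = (\<Prod>j\<in>UNIV. v $ j - u $ j)"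
    using prod.reindex[of r UNIV "\<lambda>j. v $ j - u $ j"] assms
    by (simp add: bij_def o_def)
  then show ?thesis
    unfolding relab_cbox[OF assms] content_cbox_if_cart e by simp
qed

lemma has_integral_relab_cbox:
  fixes f :: "real^'a::finite \<Rightarrow> 'c::real_normed_vector"
  assumes r: "bij (r :: 'b::finite \<Rightarrow> 'a)" and f: "(f has_integral i) (cbox a b)"
  shows "((\<lambda>y. f (relab (inv r) y)) has_integral i) (cbox (relab r a) (relab r b))"
proof -
  have ir: "bij (inv r)" using r by (simp add: bij_imp_bij_inv)
  have "((\<lambda>y. f (relab (inv r) y)) has_integral (1/1) *\<^sub>R i) (relab r ` cbox a b)"
  proof (rule has_integral_twiddle[where g = "relab (inv r)" and h = "relab r"])
    show "\<And>x. relab r (relab (inv r) x) = x" using r by simp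
    show "\<And>x. relab (inv r) (relab r x) = x" using r by simp
    show "\<And>x. continuous (at x) (relab (inv r))"
      by (simp add: bounded_linear_relab linear_continuous_at)
    show "\<And>u v. \<exists>w z. relab (inv r) ` cbox u v = cbox w z"
      using relab_cbox[OF ir] by blast
    show "\<And>u v. \<exists>w z. relab r ` cbox u v = cbox w z"
      using relab_cbox[OF r] by blast
    show "\<And>u v. Henstock_Kurzweil_Integration.content (relab (inv r) ` cbox u v) = 1 * Henstock_Kurzweil_Integration.content (cbox u v)"
      using content_relab[OF ir] by simp
  qed (use f in auto)
  then show ?thesis using relab_cbox[OF r] by simp
qed

lemma ball_relab_sub: "bij r \<Longrightarrow> relab r ` ball 0 B \<subseteq> ball 0 B"
  by (auto simp: norm_relab)

lemma ball_relab: assumes "bij r" shows "relab r ` ball 0 B = ball 0 B"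
proof
  show "relab r ` ball 0 B \<subseteq> ball 0 B" using ball_relab_sub[OF assms] .
  have "relab (inv r) ` ball 0 B \<subseteq> ball 0 B" using ball_relab_sub[OF bij_imp_bij_inv[OF assms]] .
  then have "relab r ` relab (inv r) ` ball 0 B \<subseteq> relab r ` ball 0 B" by blast
  then show "ball 0 B \<subseteq> relab r ` ball 0 B" using assms by (simp add: image_image)
qed

lemma has_integral_relab_aux:
  fixes f :: "real^'a::finite \<Rightarrow> 'c::banach"
  assumes r: "bij (r :: 'b::finite \<Rightarrow> 'a)" and f: "(f has_integral i) S"
  shows "((\<lambda>y. f (relab (inv r) y)) has_integral i) (relab r ` S)"
proof -
  let ?F = "\<lambda>x. if x \<in> S then f x else 0"
  have Feq: "(\<lambda>y. if y \<in> relab r ` S then f (relab (inv r) y) else 0) = (\<lambda>y. ?F (relab (inv r) y))"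
    using r by (simp add: relab_mem_iff)
  have c: "cbox c d = cbox (relab r (relab (inv r) c)) (relab r (relab (inv r) d))" for c d :: "real^'b"
    using r by simp
  have bs: "ball 0 B \<subseteq> cbox (relab (inv r) c) (relab (inv r) d)" if "ball 0 B \<subseteq> cbox c d" for B c d
  proof -
    have "relab (inv r) ` ball 0 B \<subseteq> relab (inv r) ` cbox c d" using that by blast
    then show ?thesis using ball_relab[OF bij_imp_bij_inv[OF r]] relab_cbox[OF bij_imp_bij_inv[OF r]] by simp
  qed
  from f have A: "\<forall>a b. ?F integrable_on cbox a b" and
    B: "\<forall>e>0. \<exists>B>0. \<forall>a b. ball 0 B \<subseteq> cbox a b \<longrightarrow> norm (integral (cbox a b) ?F - i) < e"
    by (subst (asm) has_integral_alt'; blast)+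
  have cb: "((\<lambda>y. ?F (relab (inv r) y)) has_integral integral (cbox (relab (inv r) c) (relab (inv r) d)) ?F) (cbox c d)" for c d
  proof -
    have "?F integrable_on cbox (relab (inv r) c) (relab (inv r) d)" using A by blast
    then have "(?F has_integral integral (cbox (relab (inv r) c) (relab (inv r) d)) ?F) (cbox (relab (inv r) c) (relab (inv r) d))"
      by (rule integrable_integral)
    from has_integral_relab_cbox[OF r this] show ?thesis using r by simp
  qed
  show ?thesis
    unfolding has_integral_alt' Feq
  proof (intro conjI allI impI)
    fix c d show "(\<lambda>y. ?F (relab (inv r) y)) integrable_on cbox c d"
      using cb by blast
  next
    fix e :: real assume "e > 0"
    then obtain B where "B > 0" and HB: "\<forall>a b. ball 0 B \<subseteq> cbox a b \<longrightarrow> norm (integral (cbox a b) ?F - i) < e"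
      using B by blast
    show "\<exists>B>0. \<forall>a b. ball 0 B \<subseteq> cbox a b \<longrightarrow> norm (integral (cbox a b) (\<lambda>y. ?F (relab (inv r) y)) - i) < e"
    proof (intro exI[of _ B] conjI allI impI)
      show "B > 0" by fact
      fix c d :: "real^'b" assume "ball 0 B \<subseteq> cbox c d"
      then have "ball 0 B \<subseteq> cbox (relab (inv r) c) (relab (inv r) d)" by (rule bs)
      then have "norm (integral (cbox (relab (inv r) c) (relab (inv r) d)) ?F - i) < e" using HB by blast
      moreover have "integral (cbox c d) (\<lambda>y. ?F (relab (inv r) y)) = integral (cbox (relab (inv r) c) (relab (inv r) d)) ?F"
        using cb by (rule integral_unique)
      ultimately show "norm (integral (cbox c d) (\<lambda>y. ?F (relab (inv r) y)) - i) < e" by simp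
    qed
  qed
qed

lemma has_integral_relab:
  fixes f :: "real^'a::finite \<Rightarrow> 'c::banach"
  assumes r: "bij (r :: 'b::finite \<Rightarrow> 'a)"
  shows "((\<lambda>y. f (relab (inv r) y)) has_integral i) (relab r ` S) \<longleftrightarrow> (f has_integral i) S"
proof
  assume h: "((\<lambda>y. f (relab (inv r) y)) has_integral i) (relab r ` S)"
  have ir: "bij (inv r)" using r by (simp add: bij_imp_bij_inv)
  have "((\<lambda>x. f (relab (inv r) (relab (inv (inv r)) x))) has_integral i) (relab (inv r) ` relab r ` S)"
    using has_integral_relab_aux[OF ir h] .
  moreover have "relab (inv r) ` relab r ` S = S" using r by (simp add: image_image)
  moreover have "inv (inv r) = r" using r by (simp add: inv_inv_eq)
  ultimately show "(f has_integral i) S" using r by simp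
qed (rule has_integral_relab_aux[OF r])

lemma det_relab:
  fixes A :: "real^'a::finite^'a" and r :: "'b::finite \<Rightarrow> 'a"
  assumes r: "bij r"
  shows "det (\<chi> i j. A $ r i $ r j) = det A"
proof -
  let ?c = "\<lambda>q. (\<lambda>x. r (q (inv r x)))"
  let ?d = "\<lambda>p. (\<lambda>y. inv r (p (r y)))"
  have rir: "r (inv r x) = x" for x using r by (simp add: bij_is_surj surj_f_inv_f)
  have irr: "inv r (r x) = x" for x using r by (simp add: bij_is_inj inv_f_f)
  have sgn: "sign (?c q) = sign q" if "q permutes (UNIV::'b set)" for q
  proof -
    have pb: "permutes_bij_finite q UNIV UNIV r (inv r)"
    proof (intro permutes_bij_finite.intro permutes_bij.intro permutes_bij_finite_axioms.intro)
      show "q permutes UNIV" by (rule that)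
      show "bij_betw r UNIV UNIV" using r by (simp add: bij_def)
      show "\<And>x. x \<in> UNIV \<Longrightarrow> inv r (r x) = x" by (rule irr)
      show "finite (UNIV :: 'b set)" by simp
    qed
    have "sign (\<lambda>x. if x \<in> UNIV then r (q (inv r x)) else x) = sign q"
      using permutes_bij_finite.sign_p'[OF pb] .
    then show ?thesis by simp
  qed
  have cperm: "?c q permutes UNIV" if "q permutes (UNIV::'b set)" for q
  proof (rule bij_imp_permutes)
    have "bij q" using that by (rule permutes_bij)
    then have "bij (r \<circ> q \<circ> inv r)" by (intro bij_comp bij_imp_bij_inv r)
    then show "bij_betw (?c q) UNIV UNIV" by (simp add: o_def)
  qed simp
  have dperm: "?d p permutes UNIV" if "p permutes (UNIV::'a set)" for p
  proof (rule bij_imp_permutes)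
    have "bij p" using that by (rule permutes_bij)
    then have "bij (inv r \<circ> p \<circ> r)" by (intro bij_comp bij_imp_bij_inv r)
    then show "bij_betw (?d p) UNIV UNIV" by (simp add: o_def)
  qed simp
  have bb: "bij_betw ?c {q. q permutes (UNIV::'b set)} {p. p permutes (UNIV::'a set)}"
  proof (rule bij_betw_byWitness[where f'="?d"])
    show "\<forall>q\<in>{q. q permutes (UNIV::'b set)}. ?d (?c q) = q" by (simp add: irr)
    show "\<forall>p\<in>{p. p permutes (UNIV::'a set)}. ?c (?d p) = p" by (simp add: rir)
    show "?c ` {q. q permutes UNIV} \<subseteq> {p. p permutes UNIV}" using cperm by blast
    show "?d ` {p. p permutes UNIV} \<subseteq> {q. q permutes UNIV}" using dperm by blast
  qed
  have pr: "(\<Prod>i\<in>UNIV. A $ r i $ r (q i)) = (\<Prod>a\<in>UNIV. A $ a $ ?c q a)" for q :: "'b \<Rightarrow> 'b"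
  proof -
    have ru: "range r = UNIV" using r by (simp add: bij_is_surj)
    have "(\<Prod>a\<in>UNIV. A $ a $ ?c q a) = (\<Prod>a\<in>range r. A $ a $ ?c q a)" by (simp only: ru)
    also have "\<dots> = (\<Prod>i\<in>UNIV. A $ r i $ ?c q (r i))"
      using prod.reindex[OF bij_is_inj[OF r], of "\<lambda>a. A $ a $ ?c q a"] by (simp only: o_def)
    also have "\<dots> = (\<Prod>i\<in>UNIV. A $ r i $ r (q i))" by (simp only: irr)
    finally show ?thesis by (rule sym)
  qed
  have "det (\<chi> i j. A $ r i $ r j) = (\<Sum>q\<in>{q. q permutes UNIV}. of_int (sign q) * (\<Prod>i\<in>UNIV. A $ r i $ r (q i)))"
    unfolding det_def by (simp only: vec_lambda_beta)
  also have "\<dots> = (\<Sum>q\<in>{q. q permutes UNIV}. of_int (sign (?c q)) * (\<Prod>a\<in>UNIV. A $ a $ ?c q a))"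
  proof (rule sum.cong[OF refl])
    fix q assume "q \<in> {q. q permutes (UNIV::'b set)}"
    then have "sign (?c q) = sign q" using sgn by blast
    then show "of_int (sign q) * (\<Prod>i\<in>UNIV. A $ r i $ r (q i)) = of_int (sign (?c q)) * (\<Prod>a\<in>UNIV. A $ a $ ?c q a)"
      by (simp only: pr)
  qed
  also have "\<dots> = (\<Sum>p\<in>{p. p permutes UNIV}. of_int (sign p) * (\<Prod>a\<in>UNIV. A $ a $ p a))"
    using sum.reindex_bij_betw[OF bb, of "\<lambda>p. of_int (sign p) * (\<Prod>a\<in>UNIV. A $ a $ p a)"] by (simp only:)
  also have "\<dots> = det A" unfolding det_def ..
  finally show ?thesis .
qed

lemma relab_axis: assumes r: "bij r" shows "relab (inv r) (axis j 1) = axis (r j) (1::real)"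
proof -
  have "inv r i = j \<longleftrightarrow> i = r j" for i using bij_inv_eq_iff[OF r, of j i] by auto
  then show ?thesis by (simp add: vec_eq_iff axis_def)
qed

lemma matrix_relab_conj:
  assumes r: "bij r"
  shows "matrix (\<lambda>y. relab r (L (relab (inv r) y))) = (\<chi> i j. matrix L $ r i $ r j)"
  using r by (simp add: matrix_def vec_eq_iff relab_axis)

lemma cov_wo_real:
  fixes f :: "real^'m::{finite,wellorder} \<Rightarrow> real" and g :: "real^'m::_ \<Rightarrow> real^'m::_"
  assumes S: "S \<in> sets lebesgue"
    and der_g: "\<And>x. x \<in> S \<Longrightarrow> (g has_derivative g' x) (at x within S)"
    and inj: "inj_on g S"
  shows "(\<lambda>x. \<bar>det (matrix (g' x))\<bar> * f(g x)) absolutely_integrable_on S \<and>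
           integral S (\<lambda>x. \<bar>det (matrix (g' x))\<bar> * f(g x)) = b
     \<longleftrightarrow> f absolutely_integrable_on (g ` S) \<and> integral (g ` S) f = b"
proof -
  have e1: "(\<lambda>x. (\<bar>det (matrix (g' x))\<bar> *\<^sub>R vec (f (g x)) :: real^1) $ 1) = (\<lambda>x. \<bar>det (matrix (g' x))\<bar> * f (g x))"
    by simp
  have e2: "(\<lambda>x. (vec (f x) :: real^1) $ 1) = f" by simp
  have ve: "(vec a :: real^1) = vec c \<longleftrightarrow> a = c" for a c :: real
    by (metis vec_component)
  show ?thesis
    using has_absolute_integral_change_of_variables [OF S der_g inj, of "\<lambda>x. vec (f x) :: real^1" "vec b"]
    unfolding absolutely_integrable_on_1_iff integral_on_1_eq e1 e2 ve .
qed

lemma relab_abs_int: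
  fixes h :: "real^'a::finite \<Rightarrow> real" and r :: "'b::finite \<Rightarrow> 'a"
  assumes r: "bij r"
  shows "(\<lambda>y. h (relab (inv r) y)) absolutely_integrable_on (relab r ` A) \<and>
           integral (relab r ` A) (\<lambda>y. h (relab (inv r) y)) = b
         \<longleftrightarrow> h absolutely_integrable_on A \<and> integral A h = b"
proof -
  have key: "f absolutely_integrable_on S \<and> integral S f = c \<longleftrightarrow>
      (f has_integral c) S \<and> (\<lambda>x. norm (f x)) integrable_on S"
    for f :: "real^'c::finite \<Rightarrow> real" and S c
    unfolding absolutely_integrable_on_def has_integral_integrable_integral by blast
  have hi: "((\<lambda>y. h (relab (inv r) y)) has_integral b) (relab r ` A) \<longleftrightarrow> (h has_integral b) A"
    by (rule has_integral_relab[OF r])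
  have ni: "(\<lambda>y. norm (h (relab (inv r) y))) integrable_on relab r ` A \<longleftrightarrow> (\<lambda>x. norm (h x)) integrable_on A"
    using has_integral_relab[OF r, of "\<lambda>x. norm (h x)"] unfolding integrable_on_def by blast
  show ?thesis by (simp only: key hi ni)
qed

lemma card_wo: "CARD('n::finite wo) = CARD('n)"
  using bij_betw_same_card[OF bij_Rep_wo] by simp

lemma cov_fin:
  fixes f :: "real^'n::finite \<Rightarrow> real" and g :: "real^'n \<Rightarrow> real^'n"
  assumes S: "S \<in> sets lebesgue"
    and der: "\<And>x. x \<in> S \<Longrightarrow> (g has_derivative g' x) (at x within S)"
    and inj: "inj_on g S"
  shows "(\<lambda>x. \<bar>det (matrix (g' x))\<bar> * f (g x)) absolutely_integrable_on S \<and>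
           integral S (\<lambda>x. \<bar>det (matrix (g' x))\<bar> * f (g x)) = b
     \<longleftrightarrow> f absolutely_integrable_on (g ` S) \<and> integral (g ` S) f = b"
proof -
  define r where "r = (Rep_wo :: 'n wo \<Rightarrow> 'n)"
  have r: "bij r" using bij_Rep_wo r_def by simp
  define T where "T = relab r"
  define Ti where "Ti = relab (inv r)"
  have TiT [simp]: "Ti (T x) = x" for x using r by (simp add: T_def Ti_def)
  have TTi [simp]: "T (Ti y) = y" for y using r by (simp add: T_def Ti_def)
  have blT: "bounded_linear T" "bounded_linear Ti"
    unfolding T_def Ti_def by (rule bounded_linear_relab)+
  define G where "G = (\<lambda>y. T (g (Ti y)))"
  define G' where "G' = (\<lambda>y v. T (g' (Ti y) (Ti v)))"
  have TiS: "Ti ` T ` S = S" by (simp add: image_image)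
  have S2: "T ` S \<in> sets lebesgue"
  proof (rule differentiable_image_in_sets_lebesgue[OF S])
    show "DIM(real^'n) \<le> DIM(real^'n wo)" by (simp add: card_wo)
    show "T differentiable_on S" by (rule bounded_linear_imp_differentiable_on[OF blT(1)])
  qed
  have der2: "(G has_derivative G' y) (at y within T ` S)" if y: "y \<in> T ` S" for y
  proof -
    have yS: "Ti y \<in> S" using y by auto
    have d1: "(Ti has_derivative Ti) (at y within T ` S)"
      by (rule bounded_linear_imp_has_derivative[OF blT(2)])
    have d2: "(g has_derivative g' (Ti y)) (at (Ti y) within Ti ` T ` S)"
      using der[OF yS] by (simp only: TiS)
    have "((g \<circ> Ti) has_derivative (g' (Ti y) \<circ> Ti)) (at y within T ` S)"
      by (rule diff_chain_within[OF d1 d2])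
    then have "((\<lambda>z. T ((g \<circ> Ti) z)) has_derivative (\<lambda>v. T ((g' (Ti y) \<circ> Ti) v))) (at y within T ` S)"
      by (rule bounded_linear.has_derivative[OF blT(1)])
    then show ?thesis by (simp add: G_def G'_def o_def)
  qed
  have inj2: "inj_on G (T ` S)"
    using inj unfolding G_def inj_on_def by (metis TiT TTi image_iff)
  have detG: "det (matrix (G' y)) = det (matrix (g' (Ti y)))" for y
  proof -
    have "matrix (G' y) = (\<chi> i j. matrix (g' (Ti y)) $ r i $ r j)"
      unfolding G'_def T_def Ti_def by (rule matrix_relab_conj[OF r])
    then show ?thesis using det_relab[OF r] by simp
  qed
  have GS: "G ` T ` S = T ` g ` S" by (auto simp: G_def image_image)
  have main: "(\<lambda>y. \<bar>det (matrix (G' y))\<bar> * (f \<circ> Ti) (G y)) absolutely_integrable_on T ` S \<and>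
           integral (T ` S) (\<lambda>y. \<bar>det (matrix (G' y))\<bar> * (f \<circ> Ti) (G y)) = b
     \<longleftrightarrow> (f \<circ> Ti) absolutely_integrable_on (G ` T ` S) \<and> integral (G ` T ` S) (f \<circ> Ti) = b"
    by (rule cov_wo_real[OF S2 der2 inj2])
  have e1: "(\<lambda>y. \<bar>det (matrix (G' y))\<bar> * f (Ti (G y))) = (\<lambda>y. \<bar>det (matrix (g' (Ti y)))\<bar> * f (g (Ti y)))"
    by (simp add: detG G_def)
  have e2: "f \<circ> Ti = (\<lambda>y. f (Ti y))" by (simp add: o_def)
  from main have "(\<lambda>y. (\<lambda>x. \<bar>det (matrix (g' x))\<bar> * f (g x)) (Ti y)) absolutely_integrable_on T ` S \<and>
           integral (T ` S) (\<lambda>y. (\<lambda>x. \<bar>det (matrix (g' x))\<bar> * f (g x)) (Ti y)) = b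
     \<longleftrightarrow> (\<lambda>y. f (Ti y)) absolutely_integrable_on (T ` g ` S) \<and> integral (T ` g ` S) (\<lambda>y. f (Ti y)) = b"
    by (simp only: o_def e1 GS)
  moreover note relab_abs_int[OF r, where h="\<lambda>x. \<bar>det (matrix (g' x))\<bar> * f (g x)" and A=S and b=b]
  moreover note relab_abs_int[OF r, where h=f and A="g ` S" and b=b]
  ultimately show ?thesis unfolding T_def Ti_def by blast
qed

lemma integrable_lebesgue_on_iff:
  fixes h :: "'a::euclidean_space \<Rightarrow> real"
  assumes A: "A \<in> sets lebesgue"
  shows "integrable (lebesgue_on A) h \<longleftrightarrow> h absolutely_integrable_on A"
  using integrable_restrict_space[of A lebesgue h] A by (simp add: set_integrable_def)

lemma integral_lebesgue_on_eq:
  fixes h :: "'a::euclidean_space \<Rightarrow> real"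
  assumes A: "A \<in> sets lebesgue" and h: "h absolutely_integrable_on A"
  shows "integral\<^sup>L (lebesgue_on A) h = integral A h"
  using integral_restrict_space[of A lebesgue h] A set_lebesgue_integral_eq_integral(2)[OF h]
  by (simp add: set_lebesgue_integral_def)

lemma cov_leb:
  fixes f :: "real^'n::finite \<Rightarrow> real" and g :: "real^'n \<Rightarrow> real^'n"
  assumes S: "S \<in> sets lebesgue" and gS: "g ` S \<in> sets lebesgue"
    and der: "\<And>x. x \<in> S \<Longrightarrow> (g has_derivative g' x) (at x within S)"
    and inj: "inj_on g S"
  shows "integrable (lebesgue_on S) (\<lambda>x. \<bar>det (matrix (g' x))\<bar> * f (g x)) \<longleftrightarrow> integrable (lebesgue_on (g ` S)) f"
    and "(\<integral>x. \<bar>det (matrix (g' x))\<bar> * f (g x) \<partial>lebesgue_on S) = (\<integral>y. f y \<partial>lebesgue_on (g ` S))"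
proof -
  let ?H = "\<lambda>x. \<bar>det (matrix (g' x))\<bar> * f (g x)"
  note cv = cov_fin[OF S der inj, of f]
  have iff: "?H absolutely_integrable_on S \<longleftrightarrow> f absolutely_integrable_on (g ` S)"
    using cv by blast
  show "integrable (lebesgue_on S) ?H \<longleftrightarrow> integrable (lebesgue_on (g ` S)) f"
    by (simp only: integrable_lebesgue_on_iff[OF S] integrable_lebesgue_on_iff[OF gS] iff)
  show "(\<integral>x. ?H x \<partial>lebesgue_on S) = (\<integral>y. f y \<partial>lebesgue_on (g ` S))"
  proof (cases "?H absolutely_integrable_on S")
    case True
    then have "f absolutely_integrable_on (g ` S) \<and> integral (g ` S) f = integral S ?H"
      using cv[of "integral S ?H"] by blast
    then show ?thesis
      using integral_lebesgue_on_eq[OF S True] integral_lebesgue_on_eq[OF gS] by simp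
  next
    case False
    then have "\<not> integrable (lebesgue_on S) ?H" "\<not> integrable (lebesgue_on (g ` S)) f"
      using iff by (simp_all add: integrable_lebesgue_on_iff[OF S] integrable_lebesgue_on_iff[OF gS])
    then show ?thesis by (simp add: not_integrable_integral_eq)
  qed
qed

locale dfm =
  fixes \<phi> :: "real^'m::finite \<Rightarrow> real^'m" and A B :: "(real^'m) set"
  assumes dif: "diffeo_on \<phi> A B"
begin

definition gi where "gi = inv_into A \<phi>"
definition J where "J = inv_jac \<phi> A"

lemma opA: "open A" and opB: "open B" and bij: "bij_betw \<phi> A B"
  and dphi: "\<And>x. x \<in> A \<Longrightarrow> \<phi> differentiable (at x)"
  and dgi: "\<And>y. y \<in> B \<Longrightarrow> gi differentiable (at y)"
  using dif unfolding diffeo_on_def gi_def by auto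

lemma img: "\<phi> ` A = B" using bij by (simp add: bij_betw_def)

lemma gi_in: "y \<in> B \<Longrightarrow> gi y \<in> A"
  using bij unfolding gi_def by (metis bij_betw_def inv_into_into)

lemma phi_gi: "y \<in> B \<Longrightarrow> \<phi> (gi y) = y"
  using bij unfolding gi_def by (meson bij_betw_inv_into_right)

lemma gi_phi: "x \<in> A \<Longrightarrow> gi (\<phi> x) = x"
  using bij unfolding gi_def by (meson bij_betw_inv_into_left)

lemma phi_in: "x \<in> A \<Longrightarrow> \<phi> x \<in> B"
  using img by blast

lemma gi_img: "gi ` B = A"
  using gi_in phi_in gi_phi by (force simp: image_iff)

lemma gi_inj: "inj_on gi B"
  by (metis inj_on_def phi_gi)

lemma gi_der: "y \<in> B \<Longrightarrow> (gi has_derivative frechet_derivative gi (at y)) (at y)"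
  using dgi frechet_derivative_works by blast

lemma J_eq: "J y = \<bar>det (matrix (frechet_derivative gi (at y)))\<bar>"
  by (simp add: J_def inv_jac_def gi_def)

lemma J_pos: assumes y: "y \<in> B" shows "J y > 0"
proof -
  let ?Dg = "frechet_derivative gi (at y)"
  let ?Df = "frechet_derivative \<phi> (at (gi y))"
  have dg: "(gi has_derivative ?Dg) (at y)" using gi_der[OF y] .
  have df: "(\<phi> has_derivative ?Df) (at (gi y))"
    using dphi[OF gi_in[OF y]] frechet_derivative_works by blast
  have c: "((\<phi> \<circ> gi) has_derivative (?Df \<circ> ?Dg)) (at y)"
    by (rule diff_chain_at[OF dg df])
  have "((\<lambda>x. x) has_derivative (\<lambda>x. x)) (at y)" by simp
  then have "((\<phi> \<circ> gi) has_derivative (\<lambda>x. x)) (at y)"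
    by (rule has_derivative_transform_within_open[OF _ opB y]) (simp add: phi_gi)
  then have e: "?Df \<circ> ?Dg = (\<lambda>x. x)" using has_derivative_unique[OF c] by blast
  have "matrix (?Df \<circ> ?Dg) = matrix ?Df ** matrix ?Dg"
    by (rule matrix_compose[OF has_derivative_linear[OF dg] has_derivative_linear[OF df]])
  moreover have "matrix (?Df \<circ> ?Dg) = mat 1" using e matrix_id_mat_1 by (simp add: id_def)
  ultimately have "det (matrix ?Df) * det (matrix ?Dg) = 1" by (metis det_mul det_I)
  then have "det (matrix ?Dg) \<noteq> 0" by auto
  then show ?thesis by (simp add: J_eq)
qed

lemma cov:
  fixes \<Phi> :: "real^'m \<Rightarrow> real" and \<Psi> :: "real^'m \<Rightarrow> real"
  assumes eq: "\<And>y. y \<in> B \<Longrightarrow> \<Phi> y = J y * \<Psi> (gi y)"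
  shows "integrable (lebesgue_on B) \<Phi> \<longleftrightarrow> integrable (lebesgue_on A) \<Psi>"
    and "(\<integral>y. \<Phi> y \<partial>lebesgue_on B) = (\<integral>x. \<Psi> x \<partial>lebesgue_on A)"
proof -
  have S: "B \<in> sets lebesgue" using opB by auto
  have gS: "gi ` B \<in> sets lebesgue" using opA gi_img by auto
  have der: "\<And>y. y \<in> B \<Longrightarrow> (gi has_derivative frechet_derivative gi (at y)) (at y within B)"
    using gi_der has_derivative_at_withinI by blast
  note c = cov_leb[OF S gS der gi_inj, of \<Psi>]
  have i1: "integrable (lebesgue_on B) \<Phi> \<longleftrightarrow> integrable (lebesgue_on B) (\<lambda>x. \<bar>det (matrix (frechet_derivative gi (at x)))\<bar> * \<Psi> (gi x))"
    by (rule Bochner_Integration.integrable_cong) (auto simp: eq J_eq)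
  have i2: "(\<integral>y. \<Phi> y \<partial>lebesgue_on B) = (\<integral>x. \<bar>det (matrix (frechet_derivative gi (at x)))\<bar> * \<Psi> (gi x) \<partial>lebesgue_on B)"
    by (rule Bochner_Integration.integral_cong) (auto simp: eq J_eq)
  show "integrable (lebesgue_on B) \<Phi> \<longleftrightarrow> integrable (lebesgue_on A) \<Psi>"
    using i1 c(1) gi_img by simp
  show "(\<integral>y. \<Phi> y \<partial>lebesgue_on B) = (\<integral>x. \<Psi> x \<partial>lebesgue_on A)"
    using i2 c(2) gi_img by simp
qed

end

context dfm
begin

lemma push_eq: "y \<in> B \<Longrightarrow> push_density \<phi> A \<sigma> y = \<sigma> (gi y) * J y"
  by (simp add: push_density_def img gi_def J_def)

lemma push_phi: "x \<in> A \<Longrightarrow> push_density \<phi> A \<sigma> (\<phi> x) = \<sigma> x * J (\<phi> x)"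
  using push_eq[OF phi_in] gi_phi by simp

lemma proper_push: "proper_density B (push_density \<phi> A \<sigma>) \<longleftrightarrow> proper_density A \<sigma>"
proof -
  have eq: "\<And>y. y \<in> B \<Longrightarrow> push_density \<phi> A \<sigma> y = J y * \<sigma> (gi y)"
    by (simp add: push_eq mult.commute)
  have nn: "(\<forall>y\<in>B. 0 \<le> push_density \<phi> A \<sigma> y) \<longleftrightarrow> (\<forall>x\<in>A. 0 \<le> \<sigma> x)"
  proof
    assume h: "\<forall>y\<in>B. 0 \<le> push_density \<phi> A \<sigma> y"
    show "\<forall>x\<in>A. 0 \<le> \<sigma> x"
    proof
      fix x assume x: "x \<in> A"
      have "0 \<le> \<sigma> x * J (\<phi> x)" using h phi_in[OF x] push_phi[OF x] by metis
      moreover have "J (\<phi> x) > 0" using J_pos[OF phi_in[OF x]] .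
      ultimately show "0 \<le> \<sigma> x" by (simp add: zero_le_mult_iff)
    qed
  next
    assume h: "\<forall>x\<in>A. 0 \<le> \<sigma> x"
    show "\<forall>y\<in>B. 0 \<le> push_density \<phi> A \<sigma> y"
    proof
      fix y assume y: "y \<in> B"
      show "0 \<le> push_density \<phi> A \<sigma> y"
        using h gi_in[OF y] J_pos[OF y] push_eq[OF y] by simp
    qed
  qed
  have i1: "integrable (lebesgue_on B) (push_density \<phi> A \<sigma>) \<longleftrightarrow> integrable (lebesgue_on A) \<sigma>"
    using cov(1)[OF eq] by simp
  have i2: "integral\<^sup>L (lebesgue_on B) (push_density \<phi> A \<sigma>) = integral\<^sup>L (lebesgue_on A) \<sigma>"
    using cov(2)[OF eq] by simp
  show ?thesis
    unfolding proper_density_def using nn i1 i2 by simp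
qed

lemma pmarg_push: "pmarg B (\<lambda>y \<theta>. q y (gi \<theta>)) (push_density \<phi> A \<sigma>) = pmarg A q \<sigma>"
proof
  fix y
  have eq: "\<And>\<theta>. \<theta> \<in> B \<Longrightarrow> q y (gi \<theta>) * push_density \<phi> A \<sigma> \<theta> = J \<theta> * (q y (gi \<theta>) * \<sigma> (gi \<theta>))"
    by (simp add: push_eq mult_ac)
  show "pmarg B (\<lambda>y \<theta>. q y (gi \<theta>)) (push_density \<phi> A \<sigma>) y = pmarg A q \<sigma> y"
    unfolding pmarg_def using cov(2)[OF eq] .
qed

lemma param_eq: "param_transform \<phi> A p = (\<lambda>x \<theta>. p x (gi \<theta>))"
  by (simp add: param_transform_def gi_def fun_eq_iff)

lemma param_rep: "rep_model k (\<lambda>x \<theta>. p x (gi \<theta>)) = (\<lambda>xv \<theta>. rep_model k p xv (gi \<theta>))"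
  by (simp add: rep_model_def fun_eq_iff)

lemma exp_info_push:
  "exp_info Y B (\<lambda>xv \<theta>. Q xv (gi \<theta>)) (push_density \<phi> A \<sigma>) = exp_info Y A Q \<sigma>"
proof -
  let ?m = "pmarg A Q \<sigma>"
  have eq: "(\<integral>y. push_density \<phi> A \<sigma> \<theta> * Q y (gi \<theta>) * ln (Q y (gi \<theta>) / ?m y) \<partial>Y)
      = J \<theta> * (\<lambda>x. \<integral>y. \<sigma> x * Q y x * ln (Q y x / ?m y) \<partial>Y) (gi \<theta>)" if t: "\<theta> \<in> B" for \<theta>
  proof -
    have "(\<lambda>y. push_density \<phi> A \<sigma> \<theta> * Q y (gi \<theta>) * ln (Q y (gi \<theta>) / ?m y))
        = (\<lambda>y. J \<theta> * (\<sigma> (gi \<theta>) * Q y (gi \<theta>) * ln (Q y (gi \<theta>) / ?m y)))"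
      by (simp add: push_eq[OF t] fun_eq_iff mult_ac)
    then show ?thesis by simp
  qed
  show ?thesis
    unfolding exp_info_def pmarg_push using cov(2)[OF eq] .
qed

lemma obj_push:
  "mmi_objective X B (param_transform \<phi> A p) xs \<gamma> k (push_density \<phi> A \<sigma>) = mmi_objective X A p xs \<gamma> k \<sigma>"
  unfolding mmi_objective_def log_marg_lik_def marg_lik_def param_eq param_rep pmarg_push exp_info_push ..

lemma push_inj:
  assumes s: "\<forall>\<theta>. \<theta> \<notin> A \<longrightarrow> \<sigma> \<theta> = 0" and t: "\<forall>\<theta>. \<theta> \<notin> A \<longrightarrow> \<tau> \<theta> = 0"
    and e: "push_density \<phi> A \<sigma> = push_density \<phi> A \<tau>"
  shows "\<sigma> = \<tau>"
proof
  fix x show "\<sigma> x = \<tau> x"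
  proof (cases "x \<in> A")
    case True
    have "\<sigma> x * J (\<phi> x) = \<tau> x * J (\<phi> x)" using e push_phi[OF True] by metis
    moreover have "J (\<phi> x) > 0" using J_pos[OF phi_in[OF True]] .
    ultimately show ?thesis by simp
  next
    case False then show ?thesis using s t by simp
  qed
qed

lemma part1:
  assumes PA: "\<forall>\<pi>\<in>P. \<forall>\<theta>. \<theta> \<notin> A \<longrightarrow> \<pi> \<theta> = 0" and \<pi>A: "\<forall>\<theta>. \<theta> \<notin> A \<longrightarrow> \<pi> \<theta> = 0"
  shows "emp_ref_prior X A p P xs \<gamma> \<pi> \<longleftrightarrow>
         emp_ref_prior X B (param_transform \<phi> A p) (push_density \<phi> A ` P) xs \<gamma> (push_density \<phi> A \<pi>)"
proof -
  have mem: "push_density \<phi> A \<pi> \<in> push_density \<phi> A ` P \<longleftrightarrow> \<pi> \<in> P"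
  proof
    assume "push_density \<phi> A \<pi> \<in> push_density \<phi> A ` P"
    then obtain \<pi>' where "\<pi>' \<in> P" "push_density \<phi> A \<pi> = push_density \<phi> A \<pi>'" by blast
    with push_inj[OF \<pi>A] PA have "\<pi> = \<pi>'" by blast
    then show "\<pi> \<in> P" using \<open>\<pi>' \<in> P\<close> by simp
  qed blast
  have ball: "(\<forall>\<pi>''\<in>push_density \<phi> A ` P. R \<pi>'') \<longleftrightarrow> (\<forall>\<pi>'\<in>P. R (push_density \<phi> A \<pi>'))" for R
    by blast
  show ?thesis
    unfolding emp_ref_prior_def mem ball proper_push obj_push ..
qed

end

lemma nn_integral_not_integrable_top:
  fixes f :: "'a \<Rightarrow> real"
  assumes m: "f \<in> borel_measurable M" and nn: "\<And>x. x \<in> space M \<Longrightarrow> 0 \<le> f x"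
    and ni: "\<not> integrable M f"
  shows "(\<integral>\<^sup>+x. ennreal (f x) \<partial>M) = \<infinity>"
proof -
  have "\<not> (\<integral>\<^sup>+x. ennreal (norm (f x)) \<partial>M) < \<infinity>" using ni m by (simp add: integrable_iff_bounded)
  moreover have "(\<integral>\<^sup>+x. ennreal (norm (f x)) \<partial>M) = (\<integral>\<^sup>+x. ennreal (f x) \<partial>M)"
    by (rule nn_integral_cong) (simp add: nn)
  ultimately have "\<not> (\<integral>\<^sup>+x. ennreal (f x) \<partial>M) < \<infinity>" by simp
  then show ?thesis using less_top[of "\<integral>\<^sup>+x. ennreal (f x) \<partial>M"] unfolding infinity_ennreal_def by blast
qed

context dfm
begin

lemma dphi_on: "\<phi> differentiable_on A"
  using dphi differentiable_at_imp_differentiable_on by blast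

lemma dgi_on: "gi differentiable_on B"
  using dgi differentiable_at_imp_differentiable_on by blast

lemma gi_meas: "gi \<in> measurable (lebesgue_on B) (lebesgue_on A)"
proof (rule measurableI)
  fix y assume "y \<in> space (lebesgue_on B)" then show "gi y \<in> space (lebesgue_on A)"
    using gi_in by simp
next
  fix S assume S: "S \<in> sets (lebesgue_on A)"
  then have SA: "S \<subseteq> A" using sets.sets_into_space by fastforce
  have "gi -` S \<inter> space (lebesgue_on B) = \<phi> ` S"
  proof (intro set_eqI iffI)
    fix y assume "y \<in> gi -` S \<inter> space (lebesgue_on B)"
    then have "y \<in> B" "gi y \<in> S" by auto
    then show "y \<in> \<phi> ` S" using phi_gi by force
  next
    fix y assume "y \<in> \<phi> ` S"
    then obtain x where "x \<in> S" "y = \<phi> x" by blast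
    then show "y \<in> gi -` S \<inter> space (lebesgue_on B)" using SA gi_phi phi_in by auto
  qed
  moreover have "\<phi> ` S \<in> sets (lebesgue_on (\<phi> ` A))"
    by (rule differentiable_image_in_sets_lebesgue_on[OF _ S _ dphi_on]) (use opA in auto)
  ultimately show "gi -` S \<inter> space (lebesgue_on B) \<in> sets (lebesgue_on B)"
    using img by simp
qed

lemma phi_meas: "\<phi> \<in> measurable (lebesgue_on A) (lebesgue_on B)"
proof (rule measurableI)
  fix x assume "x \<in> space (lebesgue_on A)" then show "\<phi> x \<in> space (lebesgue_on B)"
    using phi_in by simp
next
  fix S assume S: "S \<in> sets (lebesgue_on B)"
  then have SB: "S \<subseteq> B" using sets.sets_into_space by fastforce
  have "\<phi> -` S \<inter> space (lebesgue_on A) = gi ` S"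
  proof (intro set_eqI iffI)
    fix x assume "x \<in> \<phi> -` S \<inter> space (lebesgue_on A)"
    then have "x \<in> A" "\<phi> x \<in> S" by auto
    then show "x \<in> gi ` S" using gi_phi by force
  next
    fix x assume "x \<in> gi ` S"
    then obtain y where "y \<in> S" "x = gi y" by blast
    then show "x \<in> \<phi> -` S \<inter> space (lebesgue_on A)" using SB phi_gi gi_in by auto
  qed
  moreover have "gi ` S \<in> sets (lebesgue_on (gi ` B))"
    by (rule differentiable_image_in_sets_lebesgue_on[OF _ S _ dgi_on]) (use opB in auto)
  ultimately show "\<phi> -` S \<inter> space (lebesgue_on A) \<in> sets (lebesgue_on A)"
    using gi_img by simp
qed

lemma J_cont: "continuous_on B J"
proof -
  have c: "continuous_on B (\<lambda>y. matrix (frechet_derivative gi (at y)))"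
    using dif unfolding diffeo_on_def gi_def by blast
  have "continuous_on B (\<lambda>y. det (matrix (frechet_derivative gi (at y))))"
    unfolding det_def by (intro continuous_intros c)
  then have "continuous_on B (\<lambda>y. \<bar>det (matrix (frechet_derivative gi (at y)))\<bar>)"
    by (intro continuous_intros)
  then show ?thesis by (simp add: J_eq[abs_def])
qed

lemma J_meas: "J \<in> borel_measurable (lebesgue_on B)"
  using continuous_imp_measurable_on_sets_lebesgue[OF J_cont] opB by auto

lemma nn_cov:
  fixes \<Psi> :: "real^'m \<Rightarrow> real"
  assumes m: "\<Psi> \<in> borel_measurable (lebesgue_on A)" and nn: "\<And>x. x \<in> A \<Longrightarrow> 0 \<le> \<Psi> x"
  shows "(\<integral>\<^sup>+y. ennreal (J y * \<Psi> (gi y)) \<partial>lebesgue_on B) = (\<integral>\<^sup>+x. ennreal (\<Psi> x) \<partial>lebesgue_on A)"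
proof -
  let ?\<Phi> = "\<lambda>y. J y * \<Psi> (gi y)"
  have eq: "\<And>y. y \<in> B \<Longrightarrow> ?\<Phi> y = J y * \<Psi> (gi y)" by simp
  have mP: "?\<Phi> \<in> borel_measurable (lebesgue_on B)"
    using J_meas measurable_compose[OF gi_meas m] by (rule borel_measurable_times)
  have nP: "\<And>y. y \<in> space (lebesgue_on B) \<Longrightarrow> 0 \<le> ?\<Phi> y"
    using J_pos gi_in nn by (simp add: less_imp_le)
  show ?thesis
  proof (cases "integrable (lebesgue_on A) \<Psi>")
    case True
    then have iP: "integrable (lebesgue_on B) ?\<Phi>" using cov(1)[OF eq] by simp
    have "(\<integral>\<^sup>+y. ennreal (?\<Phi> y) \<partial>lebesgue_on B) = ennreal (integral\<^sup>L (lebesgue_on B) ?\<Phi>)"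
      by (rule nn_integral_eq_integral[OF iP]) (rule AE_I2, rule nP)
    also have "\<dots> = ennreal (integral\<^sup>L (lebesgue_on A) \<Psi>)" using cov(2)[OF eq] by simp
    also have "\<dots> = (\<integral>\<^sup>+x. ennreal (\<Psi> x) \<partial>lebesgue_on A)"
      by (rule nn_integral_eq_integral[OF True, symmetric]) (rule AE_I2, simp add: nn)
    finally show ?thesis .
  next
    case False
    then have iP: "\<not> integrable (lebesgue_on B) ?\<Phi>" using cov(1)[OF eq] by simp
    show ?thesis
      using nn_integral_not_integrable_top[OF mP nP iP] nn_integral_not_integrable_top[OF m _ False] nn
      by simp
  qed
qed

lemma S1: "distr (density (lebesgue_on B) (\<lambda>y. ennreal (J y))) (lebesgue_on A) gi = lebesgue_on A"
proof (rule measure_eqI)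
  show "sets (distr (density (lebesgue_on B) (\<lambda>y. ennreal (J y))) (lebesgue_on A) gi) = sets (lebesgue_on A)"
    by simp
next
  fix S assume "S \<in> sets (distr (density (lebesgue_on B) (\<lambda>y. ennreal (J y))) (lebesgue_on A) gi)"
  then have S: "S \<in> sets (lebesgue_on A)" by simp
  have gm: "gi \<in> measurable (density (lebesgue_on B) (\<lambda>y. ennreal (J y))) (lebesgue_on A)"
    using gi_meas by simp
  have pre: "gi -` S \<inter> B \<in> sets (lebesgue_on B)"
    using measurable_sets[OF gi_meas S] by simp
  have "emeasure (distr (density (lebesgue_on B) (\<lambda>y. ennreal (J y))) (lebesgue_on A) gi) S
      = emeasure (density (lebesgue_on B) (\<lambda>y. ennreal (J y))) (gi -` S \<inter> B)"
    using emeasure_distr[OF gm S] by simp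
  also have "\<dots> = (\<integral>\<^sup>+y. ennreal (J y) * indicator (gi -` S \<inter> B) y \<partial>lebesgue_on B)"
    by (rule emeasure_density[OF _ pre]) (use J_meas in simp)
  also have "\<dots> = (\<integral>\<^sup>+y. ennreal (J y * indicator S (gi y)) \<partial>lebesgue_on B)"
    by (rule nn_integral_cong) (auto simp: indicator_def)
  also have "\<dots> = (\<integral>\<^sup>+x. ennreal (indicator S x) \<partial>lebesgue_on A)"
    by (rule nn_cov) (use S in auto)
  also have "\<dots> = emeasure (lebesgue_on A) S"
  proof -
    have "(\<lambda>x. ennreal (indicator S x)) = (\<lambda>x. indicator S x)"
      by (rule ext) (rule ennreal_indicator)
    then show ?thesis using nn_integral_indicator[OF S] by simp
  qed
  finally show "emeasure (distr (density (lebesgue_on B) (\<lambda>y. ennreal (J y))) (lebesgue_on A) gi) S = emeasure (lebesgue_on A) S" .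
qed

end

lemma sigma_finite_lebesgue: "sigma_finite_measure (lebesgue :: ('a::euclidean_space) measure)"
proof
  show "\<exists>A::'a set set. countable A \<and> A \<subseteq> sets lebesgue \<and> \<Union>A = space lebesgue \<and> (\<forall>a\<in>A. emeasure lebesgue a \<noteq> \<infinity>)"
  proof (intro exI conjI)
    show "countable (range (\<lambda>n::nat. cball (0::'a) (real n)))" by simp
    show "range (\<lambda>n::nat. cball (0::'a) (real n)) \<subseteq> sets lebesgue"
      using lmeasurable_cball fmeasurable_def by blast
    show "\<Union> (range (\<lambda>n::nat. cball (0::'a) (real n))) = space lebesgue"
    proof -
      have "x \<in> (\<Union>n. cball (0::'a) (real n))" for x
        using real_arch_simple[of "norm x"] by (auto simp: dist_norm)
      then show ?thesis by auto
    qed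
    show "\<forall>a\<in>range (\<lambda>n::nat. cball (0::'a) (real n)). emeasure lebesgue a \<noteq> \<infinity>"
      using fmeasurableD2[OF lmeasurable_cball] unfolding infinity_ennreal_def by blast
  qed
qed

lemma sigma_finite_lebesgue_on: "S \<in> sets lebesgue \<Longrightarrow> sigma_finite_measure (lebesgue_on S)"
  by (rule sigma_finite_measure_restrict_space[OF sigma_finite_lebesgue])

context dfm
begin

definition Jk :: "nat \<Rightarrow> (nat \<Rightarrow> real^'m) \<Rightarrow> real" where
  "Jk k y = (\<Prod>i<k. J (y i))"
definition rk :: "nat \<Rightarrow> (nat \<Rightarrow> real^'m) \<Rightarrow> (nat \<Rightarrow> real^'m)" where
  "rk k y = (\<lambda>i\<in>{..<k}. gi (y i))"
definition sk :: "nat \<Rightarrow> (nat \<Rightarrow> real^'m) \<Rightarrow> (nat \<Rightarrow> real^'m)" where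
  "sk k x = (\<lambda>i\<in>{..<k}. \<phi> (x i))"

abbreviation "PA k \<equiv> PiM {..<k} (\<lambda>_. lebesgue_on A)"
abbreviation "PB k \<equiv> PiM {..<k} (\<lambda>_. lebesgue_on B)"

lemma A_leb: "A \<in> sets lebesgue" using opA by auto
lemma B_leb: "B \<in> sets lebesgue" using opB by auto
lemma psfA: "product_sigma_finite (\<lambda>_::nat. lebesgue_on A)"
  unfolding product_sigma_finite_def using sigma_finite_lebesgue_on[OF A_leb] by blast
lemma psfB: "product_sigma_finite (\<lambda>_::nat. lebesgue_on B)"
  unfolding product_sigma_finite_def using sigma_finite_lebesgue_on[OF B_leb] by blast

lemma J_nonneg: "0 \<le> J y" by (simp add: J_eq)

lemma rk_meas: "rk k \<in> measurable (PB k) (PA k)"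
  unfolding rk_def
proof (rule measurable_restrict)
  fix i assume i: "i \<in> {..<k}"
  show "(\<lambda>x. gi (x i)) \<in> measurable (PB k) (lebesgue_on A)"
    using measurable_component_singleton[OF i] gi_meas by (rule measurable_compose)
qed

lemma sk_meas: "sk k \<in> measurable (PA k) (PB k)"
  unfolding sk_def
proof (rule measurable_restrict)
  fix i assume i: "i \<in> {..<k}"
  show "(\<lambda>x. \<phi> (x i)) \<in> measurable (PA k) (lebesgue_on B)"
    using measurable_component_singleton[OF i] phi_meas by (rule measurable_compose)
qed

lemma Jk_meas: "Jk k \<in> borel_measurable (PB k)"
proof -
  have "(\<lambda>y. \<Prod>i\<in>{..<k}. J (y i)) \<in> borel_measurable (PB k)"
  proof (rule borel_measurable_prod)
    fix i assume i: "i \<in> {..<k}"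
    show "(\<lambda>y. J (y i)) \<in> borel_measurable (PB k)"
      using measurable_component_singleton[OF i] J_meas by (rule measurable_compose)
  qed
  then show ?thesis unfolding Jk_def[abs_def] .
qed

lemma Jk_pos: "y \<in> space (PB k) \<Longrightarrow> Jk k y > 0"
  unfolding Jk_def by (rule prod_pos) (auto simp: space_PiM PiE_iff intro: J_pos)

lemma rk_sk: "x \<in> space (PA k) \<Longrightarrow> rk k (sk k x) = x"
  by (auto simp: rk_def sk_def space_PiM PiE_iff gi_phi fun_eq_iff extensional_def)

lemma S1': assumes S: "S \<in> sets (lebesgue_on A)"
  shows "(\<integral>\<^sup>+y. ennreal (J y) * indicator (gi -` S \<inter> B) y \<partial>lebesgue_on B) = emeasure (lebesgue_on A) S"
proof -
  have gm: "gi \<in> measurable (density (lebesgue_on B) (\<lambda>y. ennreal (J y))) (lebesgue_on A)"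
    using gi_meas by simp
  have pre: "gi -` S \<inter> B \<in> sets (lebesgue_on B)"
    using measurable_sets[OF gi_meas S] by simp
  have "emeasure (lebesgue_on A) S = emeasure (distr (density (lebesgue_on B) (\<lambda>y. ennreal (J y))) (lebesgue_on A) gi) S"
    using S1 by simp
  also have "\<dots> = emeasure (density (lebesgue_on B) (\<lambda>y. ennreal (J y))) (gi -` S \<inter> B)"
    using emeasure_distr[OF gm S] by simp
  also have "\<dots> = (\<integral>\<^sup>+y. ennreal (J y) * indicator (gi -` S \<inter> B) y \<partial>lebesgue_on B)"
    by (rule emeasure_density[OF _ pre]) (use J_meas in simp)
  finally show ?thesis ..
qed

lemma PM: "distr (density (PB k) (\<lambda>y. ennreal (Jk k y))) (PA k) (rk k) = PA k"
proof -
  interpret pA: product_sigma_finite "\<lambda>_::nat. lebesgue_on A" by (rule psfA)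
  interpret pB: product_sigma_finite "\<lambda>_::nat. lebesgue_on B" by (rule psfB)
  show ?thesis
  proof (rule pA.PiM_eqI)
    show "finite {..<k}" by simp
    show "sets (distr (density (PB k) (\<lambda>y. ennreal (Jk k y))) (PA k) (rk k)) = sets (PA k)" by simp
  next
    fix S assume S: "\<And>i. i \<in> {..<k} \<Longrightarrow> S i \<in> sets (lebesgue_on A)"
    have rm: "rk k \<in> measurable (density (PB k) (\<lambda>y. ennreal (Jk k y))) (PA k)"
      using rk_meas by simp
    have PE: "Pi\<^sub>E {..<k} S \<in> sets (PA k)" by (rule sets_PiM_I_finite[OF _ S]) simp_all
    have pre: "rk k -` Pi\<^sub>E {..<k} S \<inter> space (PB k) \<in> sets (PB k)"
      by (rule measurable_sets[OF rk_meas PE])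
    have "emeasure (distr (density (PB k) (\<lambda>y. ennreal (Jk k y))) (PA k) (rk k)) (Pi\<^sub>E {..<k} S)
        = emeasure (density (PB k) (\<lambda>y. ennreal (Jk k y))) (rk k -` Pi\<^sub>E {..<k} S \<inter> space (PB k))"
      using emeasure_distr[OF rm PE] by simp
    also have "\<dots> = (\<integral>\<^sup>+y. ennreal (Jk k y) * indicator (rk k -` Pi\<^sub>E {..<k} S \<inter> space (PB k)) y \<partial>PB k)"
      by (rule emeasure_density[OF _ pre]) (use Jk_meas in simp)
    also have "\<dots> = (\<integral>\<^sup>+y. (\<Prod>i\<in>{..<k}. ennreal (J (y i)) * indicator (gi -` S i \<inter> B) (y i)) \<partial>PB k)"
    proof (rule nn_integral_cong)
      fix y assume y: "y \<in> space (PB k)"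
      then have yB: "\<And>i. i < k \<Longrightarrow> y i \<in> B" by (auto simp: space_PiM PiE_iff)
      have e1: "ennreal (Jk k y) = (\<Prod>i\<in>{..<k}. ennreal (J (y i)))"
        unfolding Jk_def by (rule prod_ennreal[symmetric]) (simp add: J_nonneg)
      have e2: "indicator (rk k -` Pi\<^sub>E {..<k} S \<inter> space (PB k)) y = (\<Prod>i\<in>{..<k}. indicator (gi -` S i \<inter> B) (y i) :: ennreal)"
      proof (cases "\<forall>i<k. gi (y i) \<in> S i")
        case True
        then have "rk k y \<in> Pi\<^sub>E {..<k} S" by (auto simp: rk_def)
        then show ?thesis using True y yB by (simp add: indicator_def)
      next
        case False
        then obtain j where j: "j < k" "gi (y j) \<notin> S j" by blast
        then have "rk k y \<notin> Pi\<^sub>E {..<k} S" by (auto simp: rk_def PiE_iff)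
        moreover have "(\<Prod>i\<in>{..<k}. indicator (gi -` S i \<inter> B) (y i) :: ennreal) = 0"
          using j by (intro prod_zero) (auto simp: indicator_def intro!: bexI[of _ j])
        ultimately show ?thesis by (simp add: indicator_def)
      qed
      show "ennreal (Jk k y) * indicator (rk k -` Pi\<^sub>E {..<k} S \<inter> space (PB k)) y
          = (\<Prod>i\<in>{..<k}. ennreal (J (y i)) * indicator (gi -` S i \<inter> B) (y i))"
        unfolding e1 e2 prod.distrib ..
    qed
    also have "\<dots> = (\<Prod>i\<in>{..<k}. \<integral>\<^sup>+z. ennreal (J z) * indicator (gi -` S i \<inter> B) z \<partial>lebesgue_on B)"
    proof (rule pB.product_nn_integral_prod)
      show "finite {..<k}" by simp
      fix i assume "i \<in> {..<k}"
      have "gi -` S i \<inter> B \<in> sets (lebesgue_on B)"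
        using measurable_sets[OF gi_meas S[OF \<open>i \<in> {..<k}\<close>]] by simp
      then show "(\<lambda>z. ennreal (J z) * indicator (gi -` S i \<inter> B) z) \<in> borel_measurable (lebesgue_on B)"
        using J_meas by measurable
    qed
    also have "\<dots> = (\<Prod>i\<in>{..<k}. emeasure (lebesgue_on A) (S i))"
      by (rule prod.cong[OF refl]) (rule S1'[OF S])
    finally show "emeasure (distr (density (PB k) (\<lambda>y. ennreal (Jk k y))) (PA k) (rk k)) (Pi\<^sub>E {..<k} S)
        = (\<Prod>i\<in>{..<k}. emeasure (lebesgue_on A) (S i))" .
  qed
qed

lemma K: "(\<integral>y. Jk k y * H (rk k y) \<partial>PB k) = (\<integral>x. H x \<partial>PA k)"
proof (cases "H \<in> borel_measurable (PA k)")
  case True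
  have rm: "rk k \<in> measurable (density (PB k) (\<lambda>y. ennreal (Jk k y))) (PA k)"
    using rk_meas by simp
  have "(\<integral>x. H x \<partial>PA k) = (\<integral>x. H x \<partial>distr (density (PB k) (\<lambda>y. ennreal (Jk k y))) (PA k) (rk k))"
    using PM by simp
  also have "\<dots> = (\<integral>y. H (rk k y) \<partial>density (PB k) (\<lambda>y. ennreal (Jk k y)))"
    by (rule integral_distr[OF rm True])
  also have "\<dots> = (\<integral>y. Jk k y *\<^sub>R H (rk k y) \<partial>PB k)"
  proof (rule integral_density)
    show "(\<lambda>y. H (rk k y)) \<in> borel_measurable (PB k)" using measurable_compose[OF rk_meas True] .
    show "Jk k \<in> borel_measurable (PB k)" by (rule Jk_meas)
    show "AE y in PB k. 0 \<le> Jk k y" using Jk_pos by (intro AE_I2) (simp add: less_imp_le)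
  qed
  finally show ?thesis by simp
next
  case False
  have nm: "(\<lambda>y. Jk k y * H (rk k y)) \<notin> borel_measurable (PB k)"
  proof
    assume G: "(\<lambda>y. Jk k y * H (rk k y)) \<in> borel_measurable (PB k)"
    have "(\<lambda>x. (\<lambda>y. Jk k y * H (rk k y)) (sk k x) / Jk k (sk k x)) \<in> borel_measurable (PA k)"
      using measurable_compose[OF sk_meas G] measurable_compose[OF sk_meas Jk_meas] by (rule borel_measurable_divide)
    moreover have "\<And>x. x \<in> space (PA k) \<Longrightarrow> (\<lambda>y. Jk k y * H (rk k y)) (sk k x) / Jk k (sk k x) = H x"
    proof -
      fix x assume x: "x \<in> space (PA k)"
      have "sk k x \<in> space (PB k)" using measurable_space[OF sk_meas x] .
      then have "Jk k (sk k x) > 0" by (rule Jk_pos)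
      then show "(\<lambda>y. Jk k y * H (rk k y)) (sk k x) / Jk k (sk k x) = H x"
        using rk_sk[OF x] by simp
    qed
    ultimately have "H \<in> borel_measurable (PA k)" by (rule measurable_cong[THEN iffD1, rotated]) simp
    then show False using False by simp
  qed
  then have "\<not> integrable (PB k) (\<lambda>y. Jk k y * H (rk k y))" using borel_measurable_integrable by blast
  moreover have "\<not> integrable (PA k) H" using False borel_measurable_integrable by blast
  ultimately show ?thesis by (simp add: not_integrable_integral_eq)
qed

end

lemma ereal_diff_cancel: "(a + ereal c) - (b + ereal c) = a - (b :: ereal)"
  by (cases a; cases b) simp_all

context dfm
begin

lemma rep_dt: "rep_model k (data_transform \<phi> A p) y \<theta> = Jk k y * rep_model k p (rk k y) \<theta>"
proof -
  have "rep_model k (data_transform \<phi> A p) y \<theta> = (\<Prod>i<k. J (y i) * p (gi (y i)) \<theta>)"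
    by (simp add: rep_model_def data_transform_def J_def gi_def)
  also have "\<dots> = Jk k y * (\<Prod>i<k. p (gi (y i)) \<theta>)"
    by (simp add: Jk_def prod.distrib)
  also have "(\<Prod>i<k. p (gi (y i)) \<theta>) = rep_model k p (rk k y) \<theta>"
    by (simp add: rep_model_def rk_def)
  finally show ?thesis .
qed

lemma pmarg_dt: "pmarg \<Theta> (rep_model k (data_transform \<phi> A p)) \<pi> y = Jk k y * pmarg \<Theta> (rep_model k p) \<pi> (rk k y)"
proof -
  have "(\<lambda>\<theta>. rep_model k (data_transform \<phi> A p) y \<theta> * \<pi> \<theta>) = (\<lambda>\<theta>. Jk k y * (rep_model k p (rk k y) \<theta> * \<pi> \<theta>))"
    by (simp add: rep_dt fun_eq_iff mult_ac)
  then show ?thesis unfolding pmarg_def by simp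
qed

lemma exp_dt: "exp_info (rep_space k (lebesgue_on B)) \<Theta> (rep_model k (data_transform \<phi> A p)) \<pi>
             = exp_info (rep_space k (lebesgue_on A)) \<Theta> (rep_model k p) \<pi>"
proof -
  let ?m = "pmarg \<Theta> (rep_model k p) \<pi>"
  have inner: "(\<integral>y. \<pi> \<theta> * rep_model k (data_transform \<phi> A p) y \<theta> *
                  ln (rep_model k (data_transform \<phi> A p) y \<theta> / pmarg \<Theta> (rep_model k (data_transform \<phi> A p)) \<pi> y) \<partial>PB k)
     = (\<integral>x. \<pi> \<theta> * rep_model k p x \<theta> * ln (rep_model k p x \<theta> / ?m x) \<partial>PA k)" for \<theta>
  proof -
    have "(\<integral>y. \<pi> \<theta> * rep_model k (data_transform \<phi> A p) y \<theta> *
                  ln (rep_model k (data_transform \<phi> A p) y \<theta> / pmarg \<Theta> (rep_model k (data_transform \<phi> A p)) \<pi> y) \<partial>PB k)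
        = (\<integral>y. Jk k y * (\<lambda>x. \<pi> \<theta> * rep_model k p x \<theta> * ln (rep_model k p x \<theta> / ?m x)) (rk k y) \<partial>PB k)"
    proof (rule Bochner_Integration.integral_cong[OF refl])
      fix y assume y: "y \<in> space (PB k)"
      have pos: "Jk k y \<noteq> 0" using Jk_pos[OF y] by simp
      have "(Jk k y * rep_model k p (rk k y) \<theta>) / (Jk k y * ?m (rk k y)) = rep_model k p (rk k y) \<theta> / ?m (rk k y)"
        using pos by simp
      then show "\<pi> \<theta> * rep_model k (data_transform \<phi> A p) y \<theta> *
                  ln (rep_model k (data_transform \<phi> A p) y \<theta> / pmarg \<Theta> (rep_model k (data_transform \<phi> A p)) \<pi> y)
          = Jk k y * (\<lambda>x. \<pi> \<theta> * rep_model k p x \<theta> * ln (rep_model k p x \<theta> / ?m x)) (rk k y)"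
        by (simp add: rep_dt pmarg_dt mult_ac)
    qed
    also have "\<dots> = (\<integral>x. \<pi> \<theta> * rep_model k p x \<theta> * ln (rep_model k p x \<theta> / ?m x) \<partial>PA k)"
      by (rule K)
    finally show ?thesis .
  qed
  show ?thesis unfolding exp_info_def rep_space_def inner ..
qed

lemma pmarg_pt: assumes x: "x \<in> A" shows "pmarg \<Theta> (data_transform \<phi> A p) \<pi> (\<phi> x) = J (\<phi> x) * pmarg \<Theta> p \<pi> x"
proof -
  have "(\<lambda>\<theta>. data_transform \<phi> A p (\<phi> x) \<theta> * \<pi> \<theta>) = (\<lambda>\<theta>. J (\<phi> x) * (p x \<theta> * \<pi> \<theta>))"
    by (simp add: data_transform_def J_def[symmetric] gi_def[symmetric] gi_phi[OF x] fun_eq_iff)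
  then show ?thesis unfolding pmarg_def by simp
qed

definition Cx :: "(real^'m) list \<Rightarrow> real" where
  "Cx xs = prod_list (map (\<lambda>x. J (\<phi> x)) xs)"

lemma Cx_pos: "set xs \<subseteq> A \<Longrightarrow> Cx xs > 0"
  by (induction xs) (auto simp: Cx_def intro!: mult_pos_pos J_pos phi_in)

lemma ml_dt: "set xs \<subseteq> A \<Longrightarrow> marg_lik \<Theta> (data_transform \<phi> A p) \<pi> (map \<phi> xs) = Cx xs * marg_lik \<Theta> p \<pi> xs"
  by (induction xs) (auto simp: marg_lik_def Cx_def pmarg_pt)

lemma lml_dt:
  assumes xs: "set xs \<subseteq> A"
  shows "log_marg_lik \<Theta> (data_transform \<phi> A p) \<pi> (map \<phi> xs) = log_marg_lik \<Theta> p \<pi> xs + ereal (ln (Cx xs))"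
proof -
  have C: "Cx xs > 0" by (rule Cx_pos[OF xs])
  let ?L = "marg_lik \<Theta> p \<pi> xs"
  have iff: "0 < Cx xs * ?L \<longleftrightarrow> 0 < ?L" using C by (simp add: zero_less_mult_iff)
  show ?thesis
  proof (cases "0 < ?L")
    case True
    then show ?thesis using C
      by (simp add: log_marg_lik_def ml_dt[OF xs] ln_mult add.commute)
  next
    case False
    then show ?thesis using iff by (simp add: log_marg_lik_def ml_dt[OF xs])
  qed
qed

lemma obj_dt:
  assumes xs: "set xs \<subseteq> A"
  shows "mmi_objective B \<Theta> (data_transform \<phi> A p) (map \<phi> xs) \<gamma> k \<pi> = mmi_objective A \<Theta> p xs \<gamma> k \<pi> + ereal (ln (Cx xs))"
  unfolding mmi_objective_def lml_dt[OF xs] exp_dt by (simp add: ac_simps)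

lemma part2:
  assumes xs: "set xs \<subseteq> A"
  shows "emp_ref_prior A \<Theta> p P xs \<gamma> \<pi> \<longleftrightarrow> emp_ref_prior B \<Theta> (data_transform \<phi> A p) P (map \<phi> xs) \<gamma> \<pi>"
  unfolding emp_ref_prior_def obj_dt[OF xs] ereal_diff_cancel ..

end

theorem theorem3:
  fixes X :: "(real^'n) set" and \<Theta> :: "(real^'d) set"
    and p :: "real^'n \<Rightarrow> real^'d \<Rightarrow> real"
    and P :: "(real^'d \<Rightarrow> real) set" and xs :: "(real^'n) list" and \<gamma> :: real
  assumes model: "is_model X \<Theta> p"
    and priors_on_\<Theta>: "\<forall>\<pi>\<in>P. \<forall>\<theta>. \<theta> \<notin> \<Theta> \<longrightarrow> \<pi> \<theta> = 0"
    and data: "set xs \<subseteq> X"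
    and gamma: "\<gamma> > 0"
  shows
    "(\<forall>(\<phi> :: real^'d \<Rightarrow> real^'d) \<Theta>'. diffeo_on \<phi> \<Theta> \<Theta>' \<longrightarrow>
        (\<forall>\<pi>. (\<forall>\<theta>. \<theta> \<notin> \<Theta> \<longrightarrow> \<pi> \<theta> = 0) \<longrightarrow>
           (emp_ref_prior X \<Theta> p P xs \<gamma> \<pi> \<longleftrightarrow>
            emp_ref_prior X \<Theta>' (param_transform \<phi> \<Theta> p) (push_density \<phi> \<Theta> ` P) xs \<gamma>
              (push_density \<phi> \<Theta> \<pi>))))
   \<and> (\<forall>(\<psi> :: real^'n \<Rightarrow> real^'n) X'. diffeo_on \<psi> X X' \<longrightarrow>
        (\<forall>\<pi>. emp_ref_prior X \<Theta> p P xs \<gamma> \<pi> \<longleftrightarrow>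
             emp_ref_prior X' \<Theta> (data_transform \<psi> X p) P (map \<psi> xs) \<gamma> \<pi>))"
proof (intro conjI allI impI)
  fix \<phi> :: "real^'d \<Rightarrow> real^'d" and \<Theta>' and \<pi> :: "real^'d \<Rightarrow> real"
  assume d: "diffeo_on \<phi> \<Theta> \<Theta>'" and \<pi>: "\<forall>\<theta>. \<theta> \<notin> \<Theta> \<longrightarrow> \<pi> \<theta> = 0"
  interpret dfm \<phi> \<Theta> \<Theta>' by (rule dfm.intro[OF d])
  show "emp_ref_prior X \<Theta> p P xs \<gamma> \<pi> \<longleftrightarrow>
            emp_ref_prior X \<Theta>' (param_transform \<phi> \<Theta> p) (push_density \<phi> \<Theta> ` P) xs \<gamma>
              (push_density \<phi> \<Theta> \<pi>)"
    by (rule part1[OF priors_on_\<Theta> \<pi>])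
next
  fix \<psi> :: "real^'n \<Rightarrow> real^'n" and X' and \<pi> :: "real^'d \<Rightarrow> real"
  assume d: "diffeo_on \<psi> X X'"
  interpret dfm \<psi> X X' by (rule dfm.intro[OF d])
  show "emp_ref_prior X \<Theta> p P xs \<gamma> \<pi> \<longleftrightarrow>
             emp_ref_prior X' \<Theta> (data_transform \<psi> X p) P (map \<psi> xs) \<gamma> \<pi>"
    by (rule part2[OF data])
qed

end
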